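(* For any integer $N>10$ and any integer $m\ge1$, there exists a collection $\mathcal{I}$ of $N$ pairwise disjoint subintervals of $[-\tfrac12,\tfrac12]$, each of length $\frac{N^{-(2m-1)}}{3m}$, such that the Minkowski sums $I_1+\cdots+I_m$ ($I_1,\dots,I_m\in\mathcal{I}$) form a pairwise disjoint collection, i.e. whenever $(I_1,\dots,I_m)$ and $(J_1,\dots,J_m)$ are elements of $\mathcal{I}^m$ that differ as multisets, $(I_1+\cdots+I_m)\cap(J_1+\cdots+J_m)=\emptyset$. *)

theory Defs
  imports "HOL-Analysis.Analysis" "HOL-Library.Multiset"
begin

definition minkowski_sum :: "nat \<Rightarrow> (nat \<Rightarrow> real set) \<Rightarrow> real set" where
  "minkowski_sum m S = {(\<Sum>k<m. x k) | x. \<forall>k<m. x k \<in> S k}"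

end

theory Submission
  imports Defs
begin

lemma geom_bound:
  fixes q k :: nat assumes "q \<ge> 1"
  shows "(q - 1) * (\<Sum>t<k. q^t) \<le> q^k"
proof (induction k)
  case (Suc k)
  obtain p where p: "q = Suc p" using assms by (cases q) auto
  have "(q - 1) * (\<Sum>t<Suc k. q^t) = (q - 1) * (\<Sum>t<k. q^t) + (q-1)*q^k" by (simp add: algebra_simps)
  also have "\<dots> \<le> q^k + (q-1)*q^k" using Suc by simp
  also have "\<dots> = q^Suc k" unfolding p by simp
  finally show ?case .
qed simp

lemma count_bound:
  fixes q m :: nat assumes q: "q \<ge> 10" and m: "m \<ge> 1"
  shows "(\<Sum>s\<in>{1..m}. \<Sum>t<s. q^s * q^t) \<le> 2*q^(2*m-1)"
  using m
proof (induction m rule: dec_induct)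
  case base then show ?case by simp
next
  case (step m)
  have split: "(\<Sum>s\<in>{1..Suc m}. \<Sum>t<s. q^s * q^t) = (\<Sum>s\<in>{1..m}. \<Sum>t<s. q^s * q^t) + q^(Suc m) * (\<Sum>t<Suc m. q^t)"
    by (simp add: sum_distrib_left algebra_simps)
  define r where "r = q^(2*m-1)"
  have x1: "2*Suc m - 1 = Suc (Suc (2*m-1))" using step.hyps by simp
  have x2: "Suc m + Suc m = Suc (Suc (Suc (2*m-1)))" using step.hyps by simp
  have e1: "q^(2*Suc m - 1) = q*q*r" unfolding x1 r_def by simp
  have e2: "q^(Suc m) * q^(Suc m) = q*q*q*r" unfolding r_def power_add[symmetric] x2 by simp
  have g: "(q - 1) * (q^(Suc m) * (\<Sum>t<Suc m. q^t)) \<le> q*q*q*r"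
  proof -
    have "(q - 1) * (q^(Suc m) * (\<Sum>t<Suc m. q^t)) = q^(Suc m) * ((q - 1) * (\<Sum>t<Suc m. q^t))"
      by (simp add: algebra_simps)
    also have "\<dots> \<le> q^(Suc m) * q^(Suc m)" using geom_bound[of q "Suc m"] q by simp
    also have "\<dots> = q*q*q*r" by (rule e2)
    finally show ?thesis .
  qed
  have key: "(q-1) * (2*r) + q*q*q*r \<le> (q-1)*(2*(q*q*r))"
  proof -
    have "2*(q-1) + q*q*q \<le> (q-1)*(2*(q*q))"
    proof -
      obtain p where p: "q = p + 10" using q by (metis add.commute le_iff_add)
      show ?thesis unfolding p by (simp add: algebra_simps)
    qed
    from mult_le_mono1[OF this, of r] show ?thesis by (simp add: algebra_simps)
  qed
  have "(q-1) * (\<Sum>s\<in>{1..Suc m}. \<Sum>t<s. q^s * q^t) \<le> (q-1) * (2*r) + q*q*q*r"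
    unfolding split add_mult_distrib2 using step.IH g unfolding r_def
    by (intro add_mono) auto
  also have "\<dots> \<le> (q-1)*(2*(q*q*r))" by (rule key)
  finally show ?case unfolding e1 using q by (simp add: mult_le_cancel1)
qed


definition good :: "nat \<Rightarrow> nat \<Rightarrow> (nat \<Rightarrow> int) \<Rightarrow> bool" where
  "good m n x \<longleftrightarrow> (\<forall>F G. set_mset F \<subseteq> {..<n} \<longrightarrow> set_mset G \<subseteq> {..<n} \<longrightarrow>
      size F = size G \<longrightarrow> size F \<le> m \<longrightarrow> F \<noteq> G \<longrightarrow>
      sum_mset (image_mset x F) \<noteq> sum_mset (image_mset x G))"

definition Dset :: "nat \<Rightarrow> nat \<Rightarrow> (nat list \<times> nat list) set" where
  "Dset q m = (\<Union>s\<in>{1..m}. \<Union>t\<in>{..<s}. {xs. set xs \<subseteq> {..<q} \<and> length xs = s} \<times> {xs. set xs \<subseteq> {..<q} \<and> length xs = t})"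

lemma card_Dset: "card (Dset q m) \<le> (\<Sum>s\<in>{1..m}. \<Sum>t<s. q^s * q^t)"
proof -
  have "card (Dset q m) \<le> (\<Sum>s\<in>{1..m}. card (\<Union>t\<in>{..<s}. {xs. set xs \<subseteq> {..<q} \<and> length xs = s} \<times> {xs. set xs \<subseteq> {..<q} \<and> length xs = t}))"
    unfolding Dset_def by (rule card_UN_le) simp
  also have "\<dots> \<le> (\<Sum>s\<in>{1..m}. \<Sum>t<s. card ({xs. set xs \<subseteq> {..<q} \<and> length xs = s} \<times> {xs. set xs \<subseteq> {..<q} \<and> length xs = t}))"
    by (intro sum_mono card_UN_le) simp
  also have "\<dots> = (\<Sum>s\<in>{1..m}. \<Sum>t<s. q^s * q^t)"
    by (simp add: card_cartesian_product card_lists_length_eq)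
  finally show ?thesis .
qed

lemma finite_Dset: "finite (Dset q m)"
  unfolding Dset_def by (intro finite_UN_I finite_cartesian_product finite_lists_length_eq) auto

definition Bad :: "(nat \<Rightarrow> int) \<Rightarrow> nat \<Rightarrow> nat \<Rightarrow> int set" where
  "Bad x q m = (\<lambda>(u,w). (sum_list (map x u) - sum_list (map x w)) div int (length u - length w)) ` Dset q m"

lemma part_n: "F = {#i \<in># F. i \<noteq> n#} + replicate_mset (count F n) n"
  by (rule multiset_eqI) auto

lemma split_n: "sum_mset (image_mset y F) = sum_mset (image_mset y {#i \<in># F. i \<noteq> n#}) + int (count F n) * y n"
proof -
  have "sum_mset (image_mset y F) = sum_mset (image_mset y ({#i \<in># F. i \<noteq> n#} + replicate_mset (count F n) n))"
    by (rule arg_cong[OF part_n])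
  then show ?thesis by (simp add: sum_mset_replicate_mset)
qed

lemma size_n: "size F = size {#i \<in># F. i \<noteq> n#} + count F n"
proof -
  have "size F = size ({#i \<in># F. i \<noteq> n#} + replicate_mset (count F n) n)"
    by (rule arg_cong[OF part_n])
  then show ?thesis by simp
qed

lemma sum_upd: assumes "set_mset F \<subseteq> {..<Suc n}"
  shows "sum_mset (image_mset (x(n:=v)) F) = sum_mset (image_mset x {#i \<in># F. i \<noteq> n#}) + int (count F n) * v"
proof -
  have "image_mset (x(n:=v)) {#i \<in># F. i \<noteq> n#} = image_mset x {#i \<in># F. i \<noteq> n#}"
    by (intro image_mset_cong) auto
  then show ?thesis using split_n[of "x(n:=v)" F n] by simp
qed

lemma collide:
  assumes F: "set_mset F \<subseteq> {..<Suc n}" and G: "set_mset G \<subseteq> {..<Suc n}"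
    and sz: "size F = size G" "size F \<le> m" and nq: "n \<le> q"
    and lt: "count G n < count F n"
    and eq: "sum_mset (image_mset (x(n:=v)) F) = sum_mset (image_mset (x(n:=v)) G)"
  shows "v \<in> Bad x q m"
proof -
  define F' where "F' = {#i \<in># F. i \<noteq> n#}"
  define G' where "G' = {#i \<in># G. i \<noteq> n#}"
  define k where "k = count F n"
  define l where "l = count G n"
  have sF: "size F = size F' + k" unfolding F'_def k_def by (rule size_n)
  have sG: "size G = size G' + l" unfolding G'_def l_def by (rule size_n)
  obtain u where u: "mset u = G'" using ex_mset by blast
  obtain w where w: "mset w = F'" using ex_mset by blast
  have lu: "length u = size G'" unfolding u[symmetric] by simp
  have lw: "length w = size F'" unfolding w[symmetric] by simp
  have kl: "l < k" using lt unfolding k_def l_def .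
  have dlen1: "length w < length u" using sF sG sz kl lu lw by linarith
  have dlen2: "length u - length w = k - l" using sF sG sz kl lu lw by linarith
  have su: "sum_list (map x u) = sum_mset (image_mset x G')"
    unfolding u[symmetric] sum_mset_sum_list[symmetric] by simp
  have sw: "sum_list (map x w) = sum_mset (image_mset x F')"
    unfolding w[symmetric] sum_mset_sum_list[symmetric] by simp
  have e: "sum_mset (image_mset x F') + int k * v = sum_mset (image_mset x G') + int l * v"
    using eq unfolding sum_upd[OF F] sum_upd[OF G] F'_def G'_def k_def l_def .
  have e2: "sum_list (map x u) - sum_list (map x w) = int (k - l) * v"
  proof -
    have "int (k - l) = int k - int l" using kl by simp
    then show ?thesis unfolding su sw using e by (simp add: algebra_simps)
  qed
  have pos: "int (k - l) > 0" using kl by simp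
  have vv: "v = (sum_list (map x u) - sum_list (map x w)) div int (length u - length w)"
    unfolding e2 dlen2 using pos by simp
  have setu: "set u \<subseteq> {..<q}"
  proof
    fix i assume "i \<in> set u"
    then have "i \<in># G'" unfolding u[symmetric] by simp
    then have "i \<in># G" "i \<noteq> n" unfolding G'_def by auto
    then show "i \<in> {..<q}" using G nq by fastforce
  qed
  have setw: "set w \<subseteq> {..<q}"
  proof
    fix i assume "i \<in> set w"
    then have "i \<in># F'" unfolding w[symmetric] by simp
    then have "i \<in># F" "i \<noteq> n" unfolding F'_def by auto
    then show "i \<in> {..<q}" using F nq by fastforce
  qed
  have l1: "length u \<in> {1..m}" using dlen1 lu sz sG by auto
  have l2: "length w \<in> {..<length u}" using dlen1 by simp
  have "(u, w) \<in> Dset q m" unfolding Dset_def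
    by (rule UN_I[OF l1], rule UN_I[OF l2]) (simp add: setu setw)
  then show ?thesis unfolding Bad_def by (rule image_eqI[rotated]) (simp add: vv)
qed
lemma good0: "good m 0 x"
  unfolding good_def by auto

lemma good_step:
  assumes g: "good m n x" and nq: "n \<le> q" and vB: "v \<notin> Bad x q m"
  shows "good m (Suc n) (x(n:=v))"
  unfolding good_def
proof (intro allI impI)
  fix F G :: "nat multiset"
  assume F: "set_mset F \<subseteq> {..<Suc n}" and G: "set_mset G \<subseteq> {..<Suc n}"
    and sz: "size F = size G" and szm: "size F \<le> m" and ne: "F \<noteq> G"
  show "sum_mset (image_mset (x(n:=v)) F) \<noteq> sum_mset (image_mset (x(n:=v)) G)"
  proof
    assume eq: "sum_mset (image_mset (x(n:=v)) F) = sum_mset (image_mset (x(n:=v)) G)"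
    consider "count G n < count F n" | "count F n < count G n" | "count F n = count G n" by linarith
    then show False
    proof cases
      case 1
      then show False using collide[OF F G sz szm nq 1 eq] vB by simp
    next
      case 2
      then show False using collide[OF G F sz[symmetric] _ nq 2 eq[symmetric]] vB sz szm by simp
    next
      case 3
      define F' where "F' = {#i \<in># F. i \<noteq> n#}"
      define G' where "G' = {#i \<in># G. i \<noteq> n#}"
      have sF: "size F = size F' + count F n" unfolding F'_def by (rule size_n)
      have sG: "size G = size G' + count G n" unfolding G'_def by (rule size_n)
      have ne': "F' \<noteq> G'"
      proof
        assume "F' = G'"
        then have "F = G" using part_n[of F n] part_n[of G n] 3 unfolding F'_def G'_def by metis
        then show False using ne by simp
      qed
      have s1: "set_mset F' \<subseteq> {..<n}" using F unfolding F'_def by auto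
      have s2: "set_mset G' \<subseteq> {..<n}" using G unfolding G'_def by auto
      have "sum_mset (image_mset x F') = sum_mset (image_mset x G')"
        using eq unfolding sum_upd[OF F] sum_upd[OF G] F'_def G'_def 3 by simp
      moreover have "size F' = size G'" "size F' \<le> m" using sF sG sz szm 3 by linarith+
      ultimately show False using g s1 s2 ne' unfolding good_def by blast
    qed
  qed
qed

lemma build:
  assumes c: "card (Dset q m) < X + 1"
  shows "n \<le> Suc q \<Longrightarrow> \<exists>x. good m n x \<and> (\<forall>i<n. 0 \<le> x i \<and> x i \<le> int X)"
proof (induction n)
  case 0 then show ?case using good0 by blast
next
  case (Suc n)
  then obtain x where x: "good m n x" "\<forall>i<n. 0 \<le> x i \<and> x i \<le> int X" by auto
  have nq: "n \<le> q" using Suc.prems by simp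
  have "card (Bad x q m) \<le> card (Dset q m)" unfolding Bad_def by (rule card_image_le[OF finite_Dset])
  then have cc: "card (Bad x q m) < card {0..int X}" using c by simp
  have "\<not> {0..int X} \<subseteq> Bad x q m"
  proof
    assume "{0..int X} \<subseteq> Bad x q m"
    then have "card {0..int X} \<le> card (Bad x q m)"
      by (rule card_mono[rotated]) (simp add: Bad_def finite_Dset)
    then show False using cc by simp
  qed
  then obtain v where v: "v \<in> {0..int X}" "v \<notin> Bad x q m" by blast
  have "good m (Suc n) (x(n:=v))" by (rule good_step[OF x(1) nq v(2)])
  moreover have "\<forall>i<Suc n. 0 \<le> (x(n:=v)) i \<and> (x(n:=v)) i \<le> int X" using x(2) v(1) by (auto simp: less_Suc_eq)
  ultimately show ?case by blast
qed

lemma msum_eq: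
  fixes x :: "nat \<Rightarrow> int" and f :: "nat \<Rightarrow> nat"
  shows "sum_mset (image_mset x (image_mset f (mset [0..<m]))) = (\<Sum>k<m. x (f k))"
proof -
  have "sum_mset (image_mset x (image_mset f (mset [0..<m]))) = sum_list (map (x \<circ> f) [0..<m])"
    by (simp add: image_mset.compositionality sum_mset_sum_list[symmetric])
  also have "\<dots> = (\<Sum>k\<in>set [0..<m]. (x \<circ> f) k)" by (rule interv_sum_list_conv_sum_set_nat)
  also have "\<dots> = (\<Sum>k<m. x (f k))" by (simp add: atLeast0LessThan)
  finally show ?thesis .
qed

lemma mink_bound:
  assumes "z \<in> minkowski_sum m (\<lambda>k. {b k .. b k + L})"
  shows "(\<Sum>k<m. b k) \<le> z \<and> z \<le> (\<Sum>k<m. b k) + real m * L"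
proof -
  obtain y where y: "z = (\<Sum>k<m. y k)" "\<forall>k<m. y k \<in> {b k .. b k + L}"
    using assms unfolding minkowski_sum_def by blast
  have "(\<Sum>k<m. b k) \<le> (\<Sum>k<m. y k)" using y(2) by (intro sum_mono) auto
  moreover have "(\<Sum>k<m. y k) \<le> (\<Sum>k<m. b k + L)" using y(2) by (intro sum_mono) auto
  moreover have "(\<Sum>k<m. b k + L) = (\<Sum>k<m. b k) + real m * L" by (simp add: sum.distrib)
  ultimately show ?thesis using y(1) by simp
qed

theorem lemma3p1:
  fixes N m :: nat
  assumes "N > 10" and "m \<ge> 1"
  shows "\<exists>a :: nat \<Rightarrow> real.
     (let L = (real N) powi (- (2 * int m - 1)) / (3 * real m) in
       (\<forall>i<N. {a i .. a i + L} \<subseteq> {-1/2 .. 1/2}) \<and>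
       (\<forall>i<N. \<forall>j<N. i \<noteq> j \<longrightarrow> {a i .. a i + L} \<inter> {a j .. a j + L} = {}) \<and>
       (\<forall>f g :: nat \<Rightarrow> nat.
          (\<forall>k<m. f k < N) \<longrightarrow> (\<forall>k<m. g k < N) \<longrightarrow>
          image_mset f (mset [0..<m]) \<noteq> image_mset g (mset [0..<m]) \<longrightarrow>
          minkowski_sum m (\<lambda>k. {a (f k) .. a (f k) + L})
            \<inter> minkowski_sum m (\<lambda>k. {a (g k) .. a (g k) + L}) = {}))"
proof -
  define q where "q = N - 1"
  define e where "e = 2*m - 1"
  define P where "P = N^e"
  define X where "X = 3*P - 2"
  have Nq: "N = Suc q" using assms(1) unfolding q_def by simp
  have q10: "q \<ge> 10" using assms(1) unfolding q_def by simp
  have e0: "e \<noteq> 0" using assms(2) unfolding e_def by simp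
  have qP: "q^e < P" unfolding P_def Nq using e0 by (intro power_strict_mono) auto
  have cD: "card (Dset q m) \<le> 2*q^e"
    using card_Dset[of q m] count_bound[OF q10 assms(2)] unfolding e_def by linarith
  have c: "card (Dset q m) < X + 1" using cD qP unfolding X_def by linarith
  obtain x where x: "good m N x" "\<forall>i<N. 0 \<le> x i \<and> x i \<le> int X"
    using build[OF c, of N] Nq by auto
  define p where "p = real P"
  have p1: "p \<ge> 1" using qP unfolding p_def by simp
  define \<delta> where "\<delta> = 1 / (3*p - 1)"
  have \<delta>0: "\<delta> > 0" unfolding \<delta>_def using p1 by simp
  define a where "a = (\<lambda>i. \<delta> * real_of_int (x i) - 1/2)"
  define L where "L = (real N) powi (- (2 * int m - 1)) / (3 * real m)"
  have ee: "2 * int m - 1 = int e" unfolding e_def using assms(2) by simp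
  have LL: "L = 1 / (3 * p * real m)"
    unfolding L_def ee p_def P_def by (simp add: power_int_minus_divide power_int_of_nat)
  have m0: "real m \<ge> 1" using assms(2) by simp
  have mL: "real m * L = 1 / (3*p)" unfolding LL using m0 by (simp add: field_simps)
  have mLd: "real m * L < \<delta>" unfolding mL \<delta>_def using p1 by (simp add: field_simps)
  have L0: "L \<ge> 0" unfolding LL using p1 m0 by simp
  have LmL: "L \<le> real m * L" using L0 m0 by (simp add: mult_le_cancel_right1)
  have Xr: "real X = 3*p - 2" unfolding X_def p_def using qP by (simp add: of_nat_diff)
  have dX: "\<delta> * real X + L \<le> 1"
  proof -
    have "1/(3*p) \<le> 1/(3*p - 1)" using p1 by (intro divide_left_mono) auto
    then have "L \<le> 1/(3*p - 1)" using LmL mL by linarith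
    moreover have "\<delta> * real X = (3*p - 2) / (3*p - 1)" unfolding Xr \<delta>_def by simp
    moreover have "(3*p - 2) / (3*p - 1) + 1/(3*p - 1) = 1" using p1 by (simp add: field_simps)
    ultimately show ?thesis by linarith
  qed
  have P1: "\<forall>i<N. {a i .. a i + L} \<subseteq> {-1/2 .. 1/2}"
  proof (intro allI impI)
    fix i assume i: "i < N"
    have "0 \<le> real_of_int (x i)" "real_of_int (x i) \<le> real X" using x(2) i by auto
    then have "0 \<le> \<delta> * real_of_int (x i)" "\<delta> * real_of_int (x i) \<le> \<delta> * real X"
      using \<delta>0 by (auto intro: mult_left_mono)
    then show "{a i .. a i + L} \<subseteq> {-1/2 .. 1/2}" unfolding a_def using dX by auto
  qed
  have P2: "\<forall>i<N. \<forall>j<N. i \<noteq> j \<longrightarrow> {a i .. a i + L} \<inter> {a j .. a j + L} = {}"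
  proof (intro allI impI)
    fix i j assume i: "i < N" and j: "j < N" and ij: "i \<noteq> j"
    have "sum_mset (image_mset x {#i#}) \<noteq> sum_mset (image_mset x {#j#})"
    proof -
      have "set_mset {#i#} \<subseteq> {..<N}" "set_mset {#j#} \<subseteq> {..<N}" "size {#i#} = size {#j#}"
        "size {#i#} \<le> m" "{#i#} \<noteq> {#j#}" using i j ij assms(2) by auto
      then show ?thesis using x(1) unfolding good_def by blast
    qed
    then have "x i \<noteq> x j" by simp
    then have "\<bar>real_of_int (x i) - real_of_int (x j)\<bar> \<ge> 1" by linarith
    then have "\<delta> * \<bar>real_of_int (x i) - real_of_int (x j)\<bar> \<ge> \<delta>" using \<delta>0 by simp
    then have "\<bar>a i - a j\<bar> \<ge> \<delta>" unfolding a_def using \<delta>0 by (simp add: abs_mult right_diff_distrib[symmetric])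
    then have "\<bar>a i - a j\<bar> > L" using mLd LmL by linarith
    then show "{a i .. a i + L} \<inter> {a j .. a j + L} = {}" by auto
  qed
  have sa: "(\<Sum>k<m. a (f k)) = \<delta> * real_of_int (\<Sum>k<m. x (f k)) - real m / 2" for f
    unfolding a_def by (simp add: sum_subtractf sum_distrib_left)
  have P3: "\<forall>f g :: nat \<Rightarrow> nat.
          (\<forall>k<m. f k < N) \<longrightarrow> (\<forall>k<m. g k < N) \<longrightarrow>
          image_mset f (mset [0..<m]) \<noteq> image_mset g (mset [0..<m]) \<longrightarrow>
          minkowski_sum m (\<lambda>k. {a (f k) .. a (f k) + L})
            \<inter> minkowski_sum m (\<lambda>k. {a (g k) .. a (g k) + L}) = {}"
  proof (intro allI impI)
    fix f g :: "nat \<Rightarrow> nat"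
    assume f: "\<forall>k<m. f k < N" and g: "\<forall>k<m. g k < N"
      and ne: "image_mset f (mset [0..<m]) \<noteq> image_mset g (mset [0..<m])"
    have sf: "set_mset (image_mset f (mset [0..<m])) \<subseteq> {..<N}" using f by auto
    have sg: "set_mset (image_mset g (mset [0..<m])) \<subseteq> {..<N}" using g by auto
    have "sum_mset (image_mset x (image_mset f (mset [0..<m]))) \<noteq> sum_mset (image_mset x (image_mset g (mset [0..<m])))"
      using x(1) sf sg ne unfolding good_def by simp
    then have neq: "(\<Sum>k<m. x (f k)) \<noteq> (\<Sum>k<m. x (g k))" unfolding msum_eq .
    then have "\<bar>real_of_int (\<Sum>k<m. x (f k)) - real_of_int (\<Sum>k<m. x (g k))\<bar> \<ge> 1" by linarith
    then have "\<delta> * \<bar>real_of_int (\<Sum>k<m. x (f k)) - real_of_int (\<Sum>k<m. x (g k))\<bar> \<ge> \<delta>" using \<delta>0 by simp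
    then have big: "\<bar>(\<Sum>k<m. a (f k)) - (\<Sum>k<m. a (g k))\<bar> \<ge> \<delta>"
      unfolding sa using \<delta>0 by (simp add: abs_mult right_diff_distrib[symmetric])
    show "minkowski_sum m (\<lambda>k. {a (f k) .. a (f k) + L})
            \<inter> minkowski_sum m (\<lambda>k. {a (g k) .. a (g k) + L}) = {}"
    proof (rule ccontr)
      assume "minkowski_sum m (\<lambda>k. {a (f k) .. a (f k) + L})
            \<inter> minkowski_sum m (\<lambda>k. {a (g k) .. a (g k) + L}) \<noteq> {}"
      then obtain z where z1: "z \<in> minkowski_sum m (\<lambda>k. {a (f k) .. a (f k) + L})"
        and z2: "z \<in> minkowski_sum m (\<lambda>k. {a (g k) .. a (g k) + L})" by blast
      have b1: "(\<Sum>k<m. a (f k)) \<le> z \<and> z \<le> (\<Sum>k<m. a (f k)) + real m * L"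
        by (rule mink_bound[OF z1])
      have b2: "(\<Sum>k<m. a (g k)) \<le> z \<and> z \<le> (\<Sum>k<m. a (g k)) + real m * L"
        by (rule mink_bound[OF z2])
      show False using b1 b2 big mLd by linarith
    qed
  qed
  show ?thesis unfolding Let_def L_def[symmetric] using P1 P2 P3 by blast
qed

end
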